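(* Let $\Omega\subset\mathbb{R}^n$ be a bounded connected open set with Lipschitz boundary (or a bounded interval if $n=1$). Given measurable sets $E_s\subset\mathbb{R}^n$ for $s\in(0,1)$ with $\chi_{E_s}\to\chi_E$ in $L^1(\Omega)$ as $s\uparrow1$, $\mathcal{J}^1_s(E_s,\Omega)<\infty$ and $\mathcal{J}^1_s(E,\Omega)<\infty$ for all $s$, and given $\delta_1>\delta_2>0$, there exist measurable sets $F_s\subset\mathbb{R}^n$, $s\in(0,1)$, such that (a) $\chi_{F_s}\to\chi_E$ in $L^1(\Omega)$ as $s\uparrow1$; (b) $F_s\cap(\Omega\setminus\Omega_{\delta_1})=E_s\cap(\Omega\setminus\Omega_{\delta_1})$ and $F_s\cap\Omega_{\delta_2}=E\cap\Omega_{\delta_2}$; (c) for all $\varepsilon>0$, $$\liminf_{s\uparrow1}(1-s)\mathcal{J}^1_s(F_s,\Omega)\le\liminf_{s\uparrow1}(1-s)\mathcal{J}^1_s(E_s,\Omega)+\limsup_{s\uparrow1}(1-s)\mathcal{J}^1_s(E,\Omega_{\delta_1+\varepsilon}).$$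
   Context: $\mathcal{J}^1_s(E,U):=\int_{E\cap U}\int_{E^c\cap U}|x-y|^{-n-s}dx\,dy$. For $\delta>0$, $\Omega_\delta:=\{x\in\Omega:d(x,\Omega^c)\le\delta\}$. *)

theory Defs
  imports "HOL-Analysis.Analysis"
begin

definition J1 :: "real \<Rightarrow> 'a::euclidean_space set \<Rightarrow> 'a set \<Rightarrow> ennreal" where
  "J1 s E U = (\<integral>\<^sup>+ x. \<integral>\<^sup>+ y. indicator (E \<inter> U) x * indicator (- E \<inter> U) y *
      ennreal (norm (x - y) powr (- (real DIM('a) + s))) \<partial>lebesgue \<partial>lebesgue)"

definition strip :: "'a::euclidean_space set \<Rightarrow> real \<Rightarrow> 'a set" where
  "strip \<Omega> \<delta> = {x \<in> \<Omega>. infdist x (- \<Omega>) \<le> \<delta>}"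

text \<open>Lipschitz boundary (coordinate-free): near every boundary point the set is,
  in a suitable orthonormal direction v, the strict subgraph of a Lipschitz function
  defined on the hyperplane orthogonal to v.\<close>
definition lipschitz_boundary :: "'a::euclidean_space set \<Rightarrow> bool" where
  "lipschitz_boundary \<Omega> \<longleftrightarrow>
     (\<forall>x \<in> frontier \<Omega>. \<exists>r>0. \<exists>v g C. norm v = 1 \<and>
        C-lipschitz_on {z. z \<bullet> v = 0} (g :: 'a \<Rightarrow> real) \<and>
        \<Omega> \<inter> ball x r = {y \<in> ball x r. y \<bullet> v < g (y - (y \<bullet> v) *\<^sub>R v)})"

definition L1dist_char :: "'a::euclidean_space set \<Rightarrow> 'a set \<Rightarrow> 'a set \<Rightarrow> ennreal" where
  "L1dist_char \<Omega> A B = (\<integral>\<^sup>+ x. ennreal (\<bar>indicator A x - indicator B x\<bar> * indicator \<Omega> x) \<partial>lebesgue)"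

end

theory Submission
  imports Defs
begin


lemma dyadic_k:
  fixes r Dm :: real assumes "0 < r" "r \<le> Dm"
  obtains k :: nat where "Dm / 2^(k+1) < r" "r \<le> Dm / 2^k"
proof -
  obtain m0 :: nat where "(1/2)^m0 < r / Dm" using real_arch_pow_inv[of "r/Dm" "1/2"] assms by auto
  then have "Dm / 2^m0 < r" using assms by (simp add: power_divide field_simps)
  then have ex: "\<exists>m::nat. Dm / 2^m < r" by blast
  define m where "m = (LEAST m::nat. Dm / 2^m < r)"
  have m: "Dm / 2^m < r" unfolding m_def by (rule LeastI_ex[OF ex])
  have "m \<noteq> 0"
  proof
    assume "m = 0" then show False using m assms by simp
  qed
  then obtain k where mk: "m = Suc k" by (cases m) auto
  have "\<not> Dm / 2^k < r" using not_less_Least[of k "\<lambda>m. Dm/2^m < r"] mk m_def by auto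
  then show ?thesis using that m mk by auto
qed

lemma kern_pointwise:
  fixes z y :: "'a::euclidean_space"
  assumes s: "0 < s" and Dm: "Dm > 0" and Om: "\<Omega> \<subseteq> cball z Dm"
  shows "indicator \<Omega> y * (ennreal (norm (z - y)) * ennreal (norm (z - y) powr -(real DIM('a) + s)))
     \<le> (\<Sum>k. ennreal ((Dm / 2^(k+1)) powr (-(real DIM('a) + s - 1))) * indicator (cball z (Dm / 2^k)) y)"
proof (cases "y \<in> \<Omega> \<and> z \<noteq> y")
  case False then show ?thesis by auto
next
  case True
  let ?r = "norm (z - y)" let ?a = "real DIM('a) + s - 1"
  let ?g = "\<lambda>k. ennreal ((Dm / 2^(k+1)) powr (-?a)) * indicator (cball z (Dm / 2^k)) y"
  have r: "0 < ?r" "?r \<le> Dm" using True Om by (auto simp: dist_norm)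
  obtain k where k: "Dm / 2^(k+1) < ?r" "?r \<le> Dm / 2^k" using dyadic_k[OF r] .
  have a: "?a \<ge> 0" using s DIM_positive[where 'a='a] by linarith
  have "indicator \<Omega> y * (ennreal ?r * ennreal (?r powr -(real DIM('a) + s))) = ennreal (?r powr (-?a))"
  proof -
    have e: "?r powr (-?a) = ?r powr 1 * ?r powr -(real DIM('a) + s)"
      by (simp only: powr_add[symmetric]) (simp add: algebra_simps)
    have "?r * ?r powr -(real DIM('a) + s) = ?r powr (-?a)"
      unfolding e using r by (simp add: powr_one)
    then show ?thesis using True by (simp add: ennreal_mult[symmetric])
  qed
  also have "\<dots> \<le> ennreal ((Dm / 2^(k+1)) powr (-?a))"
    using k a Dm by (intro ennreal_leI powr_mono2') auto
  also have "\<dots> = ?g k"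
    using k by (simp add: dist_norm)
  also have "\<dots> \<le> (\<Sum>k. ?g k)"
  proof -
    have "sum ?g {k} \<le> suminf ?g" by (rule sum_le_suminf) (auto intro: summableI)
    moreover have "sum ?g {k} = ?g k" by (subst sum.insert) auto
    ultimately show ?thesis by (simp only:)
  qed
  finally show ?thesis .
qed

lemma geom_identity:
  fixes Dm s V :: real and n k :: nat
  assumes "Dm > 0"
  shows "(Dm / 2^(k+1)) powr (-(real n + s - 1)) * (V * (Dm / 2^k)^n)
         = V * 2 powr (real n + s - 1) * Dm powr (1 - s) * (2 powr (s - 1))^k"
proof -
  have p: "0 < Dm / 2^k" using assms by simp
  have "(Dm / 2^k)^n = exp (real n * (ln Dm - real k * ln 2))"
    using assms by (simp add: powr_realpow[symmetric] powr_def ln_div ln_realpow)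
  moreover have "(Dm / 2^(k+1)) powr (-(real n + s - 1)) = exp (-(real n + s - 1) * (ln Dm - (real k + 1) * ln 2))"
    using assms by (simp add: powr_def ln_div ln_realpow ln_mult algebra_simps)
  moreover have "2 powr (real n + s - 1) = exp ((real n + s - 1) * ln 2)" by (simp add: powr_def)
  moreover have "Dm powr (1 - s) = exp ((1 - s) * ln Dm)" using assms by (simp add: powr_def)
  moreover have "(2 powr (s - 1))^k = exp (real k * ((s - 1) * ln 2))"
    by (simp add: powr_def exp_of_nat_mult[symmetric])
  ultimately show ?thesis
    by (simp add: exp_add[symmetric] algebra_simps)
qed

lemma q_bound:
  fixes s :: real assumes "0 < s" "s < 1"
  shows "(1 - s) / 4 \<le> 1 - 2 powr (s - 1)"
proof -
  define y where "y = (1 - s) * ln 2"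
  have l2: "2/3 \<le> ln (2::real)" "ln (2::real) < 1" by (rule ln2_ge_two_thirds, rule ln_2_less_1)
  have y1: "0 < y" unfolding y_def using assms l2 by (intro mult_pos_pos) auto
  have y2: "y \<le> 1 * 1" unfolding y_def using assms l2 by (intro mult_mono) auto
  have y: "0 < y" "y \<le> 1" using y1 y2 by auto
  have q: "2 powr (s - 1) = exp (-y)" unfolding y_def by (simp add: powr_def algebra_simps)
  have "exp (-y) * (1 + y) \<le> exp (-y) * exp y"
    by (intro mult_left_mono) auto
  then have e: "exp (-y) * (1 + y) \<le> 1" by (simp add: exp_minus field_simps)
  have "(1 - y/2) * (1 + y) \<ge> 1" using y by (simp add: algebra_simps)
  then have "exp (-y) * (1 + y) \<le> (1 - y/2) * (1 + y)" using e by linarith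
  then have "exp (-y) \<le> 1 - y/2" by (rule mult_right_le_imp_le) (use y in auto)
  moreover have "(1 - s) * (1/2) \<le> (1 - s) * ln 2" using assms l2 by (intro mult_left_mono) auto
  then have "(1 - s) / 4 \<le> y / 2" unfolding y_def by simp
  ultimately show ?thesis unfolding q by linarith
qed

lemma A_bound:
  fixes s Dm V :: real and n :: nat
  assumes s: "0 < s" "s < 1" and Dm: "Dm > 0" and V: "V \<ge> 0"
  shows "V * 2 powr (real n + s - 1) * Dm powr (1 - s) / (1 - 2 powr (s - 1))
      \<le> 4 * V * 2 powr real n * (1 + Dm) / (1 - s)"
proof -
  have qb: "(1 - s) / 4 \<le> 1 - 2 powr (s - 1)" by (rule q_bound[OF s])
  have qpos: "0 < 1 - 2 powr (s - 1)" using qb s by (smt (verit) divide_pos_pos)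
  have p1: "2 powr (real n + s - 1) \<le> 2 powr real n" using s by (intro powr_mono) auto
  have p2: "Dm powr (1 - s) \<le> 1 + Dm"
  proof (cases "Dm \<le> 1")
    case True then have "Dm powr (1 - s) \<le> 1" using Dm s by (intro powr_le1) auto
    then show ?thesis using Dm by simp
  next
    case False then have "Dm powr (1 - s) \<le> Dm powr 1" using s by (intro powr_mono) auto
    then show ?thesis using Dm by simp
  qed
  have i: "1 / (1 - 2 powr (s - 1)) \<le> 4 / (1 - s)"
    using qb qpos s by (simp add: field_simps)
  have "V * 2 powr (real n + s - 1) * Dm powr (1 - s) \<le> V * 2 powr real n * (1 + Dm)"
    using p1 p2 V by (intro mult_mono) auto
  then have "V * 2 powr (real n + s - 1) * Dm powr (1 - s) * (1 / (1 - 2 powr (s - 1)))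
        \<le> V * 2 powr real n * (1 + Dm) * (4 / (1 - s))"
    using i qpos V Dm s p2 by (intro mult_mono) auto
  then show ?thesis by (simp add: field_simps)
qed


lemma kbound:
  fixes z :: "'a::euclidean_space"
  assumes s: "0 < s" "s < 1" and Dm: "Dm > 0" and Om: "\<Omega> \<subseteq> cball z Dm"
  shows "(\<integral>\<^sup>+y. indicator \<Omega> y * (ennreal (norm (z - y)) * ennreal (norm (z - y) powr -(real DIM('a) + s))) \<partial>lebesgue)
    \<le> ennreal (4 * unit_ball_vol (real DIM('a)) * 2 powr real DIM('a) * (1 + Dm) / (1 - s))"
proof -
  let ?n = "DIM('a)" let ?V = "unit_ball_vol (real DIM('a))"
  let ?a = "real DIM('a) + s - 1"
  let ?g = "\<lambda>k y. ennreal ((Dm / 2^(k+1)) powr (-?a)) * indicator (cball z (Dm / 2^k)) y"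
  let ?A = "?V * 2 powr ?a * Dm powr (1 - s)" let ?q = "2 powr (s - 1) :: real"
  have "(\<integral>\<^sup>+y. indicator \<Omega> y * (ennreal (norm (z - y)) * ennreal (norm (z - y) powr -(real DIM('a) + s))) \<partial>lebesgue)
     \<le> (\<integral>\<^sup>+y. (\<Sum>k. ?g k y) \<partial>lebesgue)"
    by (intro nn_integral_mono kern_pointwise[OF s(1) Dm Om])
  also have "\<dots> = (\<Sum>k. \<integral>\<^sup>+y. ?g k y \<partial>lebesgue)"
  proof (rule nn_integral_suminf)
    fix k
    have "cball z (Dm / 2^k) \<in> sets lebesgue" by simp
    then show "?g k \<in> borel_measurable lebesgue"
      by (intro borel_measurable_times_ennreal borel_measurable_const borel_measurable_indicator)
  qed
  also have "\<dots> = (\<Sum>k. ennreal (?A * ?q^k))"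
  proof (rule suminf_cong)
    fix k
    have "(\<integral>\<^sup>+y. ?g k y \<partial>lebesgue) = (\<integral>\<^sup>+y. ?g k y \<partial>lborel)"
      by (rule nn_integral_completion)
    also have "\<dots> = ennreal ((Dm / 2^(k+1)) powr (-?a)) * emeasure lborel (cball z (Dm / 2^k))"
      by (rule nn_integral_cmult_indicator) simp
    also have "\<dots> = ennreal ((Dm / 2^(k+1)) powr (-?a) * (?V * (Dm / 2^k)^?n))"
      using Dm by (simp add: emeasure_cball ennreal_mult)
    also have "\<dots> = ennreal (?A * ?q^k)"
      by (simp only: geom_identity[OF Dm, where n="?n" and s=s and k=k and V="?V"])
    finally show "(\<integral>\<^sup>+y. ?g k y \<partial>lebesgue) = ennreal (?A * ?q^k)" .
  qed
  also have "\<dots> = ennreal (?A * (1 / (1 - ?q)))"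
  proof (rule suminf_ennreal_eq)
    show "0 \<le> ?A * ?q^k" for k by simp
    have "?q < 2 powr 0" using s by (intro powr_less_mono) auto
    then have "norm ?q < 1" by simp
    then show "(\<lambda>k. ?A * ?q^k) sums (?A * (1 / (1 - ?q)))"
      by (intro sums_mult geometric_sums)
  qed
  also have "\<dots> \<le> ennreal (4 * ?V * 2 powr real ?n * (1 + Dm) / (1 - s))"
    using A_bound[OF s Dm, where V="?V" and n="?n"] by (intro ennreal_leI) simp
  finally show ?thesis .
qed



lemma sf_lebesgue: "sigma_finite_measure (lebesgue :: 'a::euclidean_space measure)"
proof
  show "\<exists>A. countable A \<and> A \<subseteq> sets (lebesgue::'a measure) \<and> \<Union> A = space lebesgue \<and> (\<forall>a\<in>A. emeasure lebesgue a \<noteq> \<infinity>)"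
  proof (intro exI conjI)
    let ?A = "range (\<lambda>n::nat. cball (0::'a) (real n))"
    show "countable ?A" by simp
    show "?A \<subseteq> sets lebesgue" by auto
    show "\<Union> ?A = space lebesgue"
      by (auto simp: real_arch_simple)
    show "\<forall>a\<in>?A. emeasure lebesgue a \<noteq> \<infinity>"
      using emeasure_lborel_cball_finite by (auto simp: less_top)
  qed
qed

interpretation leb: sigma_finite_measure "lebesgue :: 'a::euclidean_space measure"
  by (rule sf_lebesgue)

interpretation lebpair: pair_sigma_finite "lebesgue :: 'a::euclidean_space measure" "lebesgue :: 'b::euclidean_space measure" ..

interpretation lblebpair: pair_sigma_finite "lborel :: 'a::euclidean_space measure" "lebesgue :: 'b::euclidean_space measure" ..

lemma id_leb_borel: "(\<lambda>x. x) \<in> measurable lebesgue (borel :: 'a::euclidean_space measure)"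
  using id_borel_measurable_lebesgue by (simp add: id_def)

lemma leb2_borel: "(\<lambda>p. p) \<in> measurable ((lebesgue :: 'a::euclidean_space measure) \<Otimes>\<^sub>M (lebesgue :: 'b::euclidean_space measure)) borel"
proof -
  have "(\<lambda>p. (fst p, snd p)) \<in> measurable ((lebesgue :: 'a::euclidean_space measure) \<Otimes>\<^sub>M (lebesgue :: 'b::euclidean_space measure)) (borel \<Otimes>\<^sub>M borel)"
    by (intro measurable_Pair measurable_compose[OF measurable_fst id_leb_borel] measurable_compose[OF measurable_snd id_leb_borel])
  then show ?thesis by (simp add: borel_prod)
qed

lemma kern_meas[measurable]: "(\<lambda>p. ennreal (norm (fst p - snd p) powr r)) \<in> borel_measurable ((lebesgue :: 'a::euclidean_space measure) \<Otimes>\<^sub>M (lebesgue :: 'a measure))"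
proof -
  have c: "(\<lambda>p::'a\<times>'a. norm (fst p - snd p)) \<in> borel_measurable borel"
    by (intro borel_measurable_continuous_onI continuous_intros)
  have "(\<lambda>p::'a\<times>'a. ennreal (norm (fst p - snd p) powr r)) \<in> borel_measurable borel"
    using measurable_compose[OF c, of "\<lambda>z. ennreal (z powr r)"] by measurable
  from measurable_compose[OF leb2_borel this] show ?thesis .
qed

lemma infdist_meas[measurable]: "(\<lambda>x. infdist x A) \<in> borel_measurable (lebesgue :: 'a::euclidean_space measure)"
  by (rule measurable_compose[OF id_leb_borel]) (intro borel_measurable_continuous_onI continuous_intros)


lemma strip_sets[measurable]: "open \<Omega> \<Longrightarrow> strip \<Omega> d \<in> sets (lebesgue :: 'a::euclidean_space measure)"
proof -
  assume "open \<Omega>"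
  have "strip \<Omega> d = \<Omega> \<inter> {x. infdist x (-\<Omega>) \<le> d}" by (auto simp: strip_def)
  moreover have "closed {x::'a. infdist x (-\<Omega>) \<le> d}"
    by (intro closed_Collect_le continuous_intros)
  ultimately show ?thesis using \<open>open \<Omega>\<close> by auto
qed

lemma pw:
  fixes \<Omega> E Es :: "'a::euclidean_space set" and t d :: real and x y :: 'a
  assumes "t \<le> d"
  defines "F \<equiv> Es \<inter> {x. t < infdist x (-\<Omega>)} \<union> E \<inter> {x. infdist x (-\<Omega>) \<le> t}"
  defines "D \<equiv> (Es - E) \<union> (E - Es)"
  shows "(indicator (F \<inter> \<Omega>) x * indicator (-F \<inter> \<Omega>) y :: ennreal) \<le>
    indicator (Es \<inter> \<Omega>) x * indicator (-Es \<inter> \<Omega>) y + indicator (E \<inter> strip \<Omega> d) x * indicator (-E \<inter> strip \<Omega> d) y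
    + indicator \<Omega> x * indicator \<Omega> y *
      (if min (infdist x (-\<Omega>)) (infdist y (-\<Omega>)) \<le> t \<and> t < max (infdist x (-\<Omega>)) (infdist y (-\<Omega>)) then 1 else 0)
      * (indicator D x + indicator D y)"
  using assms(1) unfolding F_def D_def strip_def
  by (auto simp: indicator_def)


lemma kern1_meas[measurable]: "(\<lambda>y. ennreal (norm (x - y) powr r)) \<in> borel_measurable (lebesgue :: 'a::euclidean_space measure)"
proof -
  have c: "(\<lambda>y::'a. norm (x - y)) \<in> borel_measurable borel"
    by (intro borel_measurable_continuous_onI continuous_intros)
  have "(\<lambda>y::'a. ennreal (norm (x - y) powr r)) \<in> borel_measurable borel"
    using measurable_compose[OF c, of "\<lambda>z. ennreal (z powr r)"] by measurable
  from measurable_compose[OF id_leb_borel this] show ?thesis .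
qed

lemma kern_meas'[measurable]: "(\<lambda>(x, y). ennreal (norm (x - y) powr r)) \<in> borel_measurable ((lebesgue :: 'a::euclidean_space measure) \<Otimes>\<^sub>M (lebesgue :: 'a measure))"
  using kern_meas[of r] by (simp add: case_prod_beta')

definition Rf :: "real \<Rightarrow> 'a::euclidean_space set \<Rightarrow> 'a set \<Rightarrow> real \<Rightarrow> ennreal" where
  "Rf s \<Omega> D t = (\<integral>\<^sup>+x. \<integral>\<^sup>+y. indicator \<Omega> x * indicator \<Omega> y *
      (if min (infdist x (-\<Omega>)) (infdist y (-\<Omega>)) \<le> t \<and> t < max (infdist x (-\<Omega>)) (infdist y (-\<Omega>)) then 1 else 0)
      * (indicator D x + indicator D y) * ennreal (norm (x - y) powr -(real DIM('a) + s)) \<partial>lebesgue \<partial>lebesgue)"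

lemma Jbound:
  fixes \<Omega> E Es :: "'a::euclidean_space set" and t d :: real
  assumes "t \<le> d" and [measurable]: "open \<Omega>" "E \<in> sets lebesgue" "Es \<in> sets lebesgue"
  defines "F \<equiv> Es \<inter> {x. t < infdist x (-\<Omega>)} \<union> E \<inter> {x. infdist x (-\<Omega>) \<le> t}"
  defines "D \<equiv> (Es - E) \<union> (E - Es)"
  shows "J1 s F \<Omega> \<le> J1 s Es \<Omega> + J1 s E (strip \<Omega> d) + Rf s \<Omega> D t"
proof -
  let ?k = "\<lambda>x y::'a. ennreal (norm (x - y) powr -(real DIM('a) + s))"
  let ?a = "\<lambda>x y. indicator (Es \<inter> \<Omega>) x * indicator (-Es \<inter> \<Omega>) y * ?k x y"
  let ?b = "\<lambda>x y. indicator (E \<inter> strip \<Omega> d) x * indicator (-E \<inter> strip \<Omega> d) y * ?k x y"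
  let ?c = "\<lambda>x y. indicator \<Omega> x * indicator \<Omega> y *
      (if min (infdist x (-\<Omega>)) (infdist y (-\<Omega>)) \<le> t \<and> t < max (infdist x (-\<Omega>)) (infdist y (-\<Omega>)) then 1 else 0)
      * (indicator D x + indicator D y) * ?k x y"
  have Om[measurable]: "\<Omega> \<in> sets lebesgue" by simp
  have Dm[measurable]: "D \<in> sets lebesgue" unfolding D_def by measurable
  have c1[measurable]: "- Es \<inter> \<Omega> \<in> sets lebesgue" "- E \<inter> strip \<Omega> d \<in> sets lebesgue"
    "Es \<inter> \<Omega> \<in> sets lebesgue" "E \<inter> strip \<Omega> d \<in> sets lebesgue"
    using sets.compl_sets[of Es lebesgue] sets.compl_sets[of E lebesgue] by (auto simp: Compl_eq_Diff_UNIV)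
  have ma[measurable]: "case_prod ?a \<in> borel_measurable (lebesgue \<Otimes>\<^sub>M lebesgue)" by measurable
  have mb[measurable]: "case_prod ?b \<in> borel_measurable (lebesgue \<Otimes>\<^sub>M lebesgue)" by measurable
  have mc[measurable]: "case_prod ?c \<in> borel_measurable (lebesgue \<Otimes>\<^sub>M lebesgue)" by measurable
  have "J1 s F \<Omega> = (\<integral>\<^sup>+x. \<integral>\<^sup>+y. indicator (F \<inter> \<Omega>) x * indicator (-F \<inter> \<Omega>) y * ?k x y \<partial>lebesgue \<partial>lebesgue)"
    by (simp add: J1_def)
  also have "\<dots> \<le> (\<integral>\<^sup>+x. \<integral>\<^sup>+y. ?a x y + ?b x y + ?c x y \<partial>lebesgue \<partial>lebesgue)"
  proof (intro nn_integral_mono)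
    fix x y :: 'a
    have "indicator (F \<inter> \<Omega>) x * indicator (-F \<inter> \<Omega>) y * ?k x y \<le>
      (indicator (Es \<inter> \<Omega>) x * indicator (-Es \<inter> \<Omega>) y + indicator (E \<inter> strip \<Omega> d) x * indicator (-E \<inter> strip \<Omega> d) y
      + indicator \<Omega> x * indicator \<Omega> y *
      (if min (infdist x (-\<Omega>)) (infdist y (-\<Omega>)) \<le> t \<and> t < max (infdist x (-\<Omega>)) (infdist y (-\<Omega>)) then 1 else 0)
      * (indicator D x + indicator D y)) * ?k x y"
      unfolding F_def D_def by (intro mult_right_mono pw assms(1)) simp
    then show "indicator (F \<inter> \<Omega>) x * indicator (-F \<inter> \<Omega>) y * ?k x y \<le> ?a x y + ?b x y + ?c x y"
      by (simp add: distrib_right)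
  qed
  also have "\<dots> = (\<integral>\<^sup>+x. (\<integral>\<^sup>+y. ?a x y \<partial>lebesgue) + (\<integral>\<^sup>+y. ?b x y \<partial>lebesgue) + (\<integral>\<^sup>+y. ?c x y \<partial>lebesgue) \<partial>lebesgue)"
    by (intro nn_integral_cong) (simp add: nn_integral_add)
  also have "\<dots> = (\<integral>\<^sup>+x. \<integral>\<^sup>+y. ?a x y \<partial>lebesgue \<partial>lebesgue) + (\<integral>\<^sup>+x. \<integral>\<^sup>+y. ?b x y \<partial>lebesgue \<partial>lebesgue)
      + (\<integral>\<^sup>+x. \<integral>\<^sup>+y. ?c x y \<partial>lebesgue \<partial>lebesgue)"
    by (simp add: nn_integral_add)
  also have "\<dots> = J1 s Es \<Omega> + J1 s E (strip \<Omega> d) + Rf s \<Omega> D t"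
    by (simp add: J1_def Rf_def)
  finally show ?thesis .
qed


lemma sep_int:
  fixes a b :: real and c :: ennreal
  shows "(\<integral>\<^sup>+t. indicator {a<..<b} t * c * (if min u v \<le> t \<and> t < max u v then 1 else 0) \<partial>lborel) \<le> c * ennreal \<bar>u - v\<bar>"
proof -
  have "(\<integral>\<^sup>+t. indicator {a<..<b} t * c * (if min u v \<le> t \<and> t < max u v then 1 else 0) \<partial>lborel)
     = (\<integral>\<^sup>+t. c * indicator ({a<..<b} \<inter> {min u v ..< max u v}) t \<partial>lborel)"
    by (intro nn_integral_cong) (auto simp: indicator_def)
  also have "\<dots> = c * emeasure lborel ({a<..<b} \<inter> {min u v ..< max u v})"
    by (rule nn_integral_cmult_indicator) simp
  also have "\<dots> \<le> c * emeasure lborel {min u v ..< max u v}"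
    by (intro mult_left_mono emeasure_mono) auto
  also have "\<dots> = c * ennreal \<bar>u - v\<bar>"
    by (simp add: abs_if max_def min_def)
  finally show ?thesis .
qed

lemma Ravg:
  fixes \<Omega> D :: "'a::euclidean_space set" and a b s :: real
  assumes [measurable]: "open \<Omega>" "D \<in> sets lebesgue"
  shows "(\<integral>\<^sup>+t. indicator {a<..<b} t * Rf s \<Omega> D t \<partial>lborel) \<le>
    (\<integral>\<^sup>+x. \<integral>\<^sup>+y. indicator \<Omega> x * indicator \<Omega> y * (indicator D x + indicator D y)
        * ennreal (norm (x - y) powr -(real DIM('a) + s)) * ennreal (norm (x - y)) \<partial>lebesgue \<partial>lebesgue)"
proof -
  have Om[measurable]: "\<Omega> \<in> sets lebesgue" by simp
  define H where "H t x y = indicator {a<..<b} t * (indicator \<Omega> x * indicator \<Omega> y *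
      (if min (infdist x (-\<Omega>)) (infdist y (-\<Omega>)) \<le> t \<and> t < max (infdist x (-\<Omega>)) (infdist y (-\<Omega>)) then 1 else 0)
      * (indicator D x + indicator D y) * ennreal (norm (x - y) powr -(real DIM('a) + s)))" for t x y
  have Hm: "(\<lambda>p. H (fst (fst p)) (snd (fst p)) (snd p)) \<in> borel_measurable ((lborel \<Otimes>\<^sub>M lebesgue) \<Otimes>\<^sub>M (lebesgue :: 'a measure))"
  proof -
    have pm: "(\<lambda>p. (snd (fst p), snd p)) \<in> measurable ((lborel \<Otimes>\<^sub>M lebesgue) \<Otimes>\<^sub>M (lebesgue :: 'a measure)) (lebesgue \<Otimes>\<^sub>M lebesgue)"
      by measurable
    have k[measurable]: "(\<lambda>p. ennreal (norm (snd (fst p) - snd p) powr -(real DIM('a) + s))) \<in> borel_measurable ((lborel \<Otimes>\<^sub>M lebesgue) \<Otimes>\<^sub>M (lebesgue :: 'a measure))"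
      using measurable_compose[OF pm kern_meas] by (simp only: fst_conv snd_conv)
    show ?thesis unfolding H_def by measurable
  qed
  have Hm2: "case_prod (\<lambda>t x. \<integral>\<^sup>+y. H t x y \<partial>lebesgue) \<in> borel_measurable (lborel \<Otimes>\<^sub>M (lebesgue :: 'a measure))"
  proof -
    have "(\<lambda>p. \<integral>\<^sup>+y. H (fst p) (snd p) y \<partial>lebesgue) \<in> borel_measurable (lborel \<Otimes>\<^sub>M (lebesgue :: 'a measure))"
      by (rule leb.borel_measurable_nn_integral) (use Hm in \<open>simp add: case_prod_beta'\<close>)
    then show ?thesis by (simp add: case_prod_beta')
  qed
  have Hm3: "case_prod (\<lambda>t y. H t x y) \<in> borel_measurable (lborel \<Otimes>\<^sub>M (lebesgue :: 'a measure))" for x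
  proof -
    have pm: "(\<lambda>p. ((fst p, x), snd p)) \<in> measurable (lborel \<Otimes>\<^sub>M (lebesgue :: 'a measure)) ((lborel \<Otimes>\<^sub>M lebesgue) \<Otimes>\<^sub>M lebesgue)"
      by measurable
    show ?thesis using measurable_compose[OF pm Hm] by (simp add: case_prod_beta')
  qed
  have "(\<integral>\<^sup>+t. indicator {a<..<b} t * Rf s \<Omega> D t \<partial>lborel) = (\<integral>\<^sup>+t. \<integral>\<^sup>+x. \<integral>\<^sup>+y. H t x y \<partial>lebesgue \<partial>lebesgue \<partial>lborel)"
    by (intro nn_integral_cong) (auto simp: Rf_def H_def indicator_def)
  also have "\<dots> = (\<integral>\<^sup>+x. \<integral>\<^sup>+t. \<integral>\<^sup>+y. H t x y \<partial>lebesgue \<partial>lborel \<partial>lebesgue)"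
    by (rule lblebpair.Fubini'[OF Hm2, symmetric])
  also have "\<dots> = (\<integral>\<^sup>+x. \<integral>\<^sup>+y. \<integral>\<^sup>+t. H t x y \<partial>lborel \<partial>lebesgue \<partial>lebesgue)"
    by (intro nn_integral_cong) (rule lblebpair.Fubini'[OF Hm3, symmetric])
  also have "\<dots> \<le> (\<integral>\<^sup>+x. \<integral>\<^sup>+y. indicator \<Omega> x * indicator \<Omega> y * (indicator D x + indicator D y)
        * ennreal (norm (x - y) powr -(real DIM('a) + s)) * ennreal (norm (x - y)) \<partial>lebesgue \<partial>lebesgue)"
  proof (intro nn_integral_mono)
    fix x y :: 'a
    let ?C = "indicator \<Omega> x * indicator \<Omega> y * (indicator D x + indicator D y)
        * ennreal (norm (x - y) powr -(real DIM('a) + s))"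
    have "(\<integral>\<^sup>+t. H t x y \<partial>lborel) = (\<integral>\<^sup>+t. indicator {a<..<b} t * ?C *
       (if min (infdist x (-\<Omega>)) (infdist y (-\<Omega>)) \<le> t \<and> t < max (infdist x (-\<Omega>)) (infdist y (-\<Omega>)) then 1 else 0) \<partial>lborel)"
      by (intro nn_integral_cong) (simp add: H_def ac_simps)
    also have "\<dots> \<le> ?C * ennreal \<bar>infdist x (-\<Omega>) - infdist y (-\<Omega>)\<bar>"
      by (rule sep_int)
    also have "\<dots> \<le> ?C * ennreal (norm (x - y))"
      using infdist_triangle_abs[of x "-\<Omega>" y] by (intro mult_left_mono ennreal_leI) (auto simp: dist_norm)
    finally show "(\<integral>\<^sup>+t. H t x y \<partial>lborel) \<le> ?C * ennreal (norm (x - y))" .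
  qed
  finally show ?thesis .
qed


lemma half_bound:
  fixes \<Omega> D :: "'a::euclidean_space set" and s Dm :: real
  assumes [measurable]: "open \<Omega>" "D \<in> sets lebesgue" and s: "0 < s" "s < 1" and Dm: "Dm > 0"
    and cb: "\<And>z. z \<in> \<Omega> \<Longrightarrow> \<Omega> \<subseteq> cball z Dm"
  shows "(\<integral>\<^sup>+x. \<integral>\<^sup>+y. indicator \<Omega> x * indicator \<Omega> y * indicator D x
        * ennreal (norm (x - y) powr -(real DIM('a) + s)) * ennreal (norm (x - y)) \<partial>lebesgue \<partial>lebesgue)
    \<le> ennreal (4 * unit_ball_vol (real DIM('a)) * 2 powr real DIM('a) * (1 + Dm) / (1 - s)) * emeasure lebesgue (D \<inter> \<Omega>)"
proof -
  let ?K = "ennreal (4 * unit_ball_vol (real DIM('a)) * 2 powr real DIM('a) * (1 + Dm) / (1 - s))"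
  have Om[measurable]: "\<Omega> \<in> sets lebesgue" by simp
  have "(\<integral>\<^sup>+x. \<integral>\<^sup>+y. indicator \<Omega> x * indicator \<Omega> y * indicator D x
        * ennreal (norm (x - y) powr -(real DIM('a) + s)) * ennreal (norm (x - y)) \<partial>lebesgue \<partial>lebesgue)
     \<le> (\<integral>\<^sup>+x. ?K * indicator (D \<inter> \<Omega>) x \<partial>lebesgue)"
  proof (intro nn_integral_mono)
    fix x :: 'a
    show "(\<integral>\<^sup>+y. indicator \<Omega> x * indicator \<Omega> y * indicator D x
        * ennreal (norm (x - y) powr -(real DIM('a) + s)) * ennreal (norm (x - y)) \<partial>lebesgue) \<le> ?K * indicator (D \<inter> \<Omega>) x"
    proof (cases "x \<in> D \<inter> \<Omega>")
      case False
      then have "(\<lambda>y. indicator \<Omega> x * indicator \<Omega> y * indicator D x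
        * ennreal (norm (x - y) powr -(real DIM('a) + s)) * ennreal (norm (x - y))) = (\<lambda>y. 0 :: ennreal)"
        by (intro ext) (auto simp: indicator_def)
      then show ?thesis by simp
    next
      case True
      have "(\<integral>\<^sup>+y. indicator \<Omega> x * indicator \<Omega> y * indicator D x
        * ennreal (norm (x - y) powr -(real DIM('a) + s)) * ennreal (norm (x - y)) \<partial>lebesgue)
        = (\<integral>\<^sup>+y. indicator \<Omega> y * (ennreal (norm (x - y)) * ennreal (norm (x - y) powr -(real DIM('a) + s))) \<partial>lebesgue)"
        using True by (intro nn_integral_cong) (auto simp: indicator_def mult.commute)
      also have "\<dots> \<le> ?K" using True by (intro kbound s Dm cb) auto
      finally show ?thesis using True by simp
    qed
  qed
  also have "\<dots> = ?K * emeasure lebesgue (D \<inter> \<Omega>)"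
    by (rule nn_integral_cmult_indicator) simp
  finally show ?thesis .
qed

lemma Lbound:
  fixes \<Omega> D :: "'a::euclidean_space set" and s Dm :: real
  assumes [measurable]: "open \<Omega>" "D \<in> sets lebesgue" and s: "0 < s" "s < 1" and Dm: "Dm > 0"
    and cb: "\<And>z. z \<in> \<Omega> \<Longrightarrow> \<Omega> \<subseteq> cball z Dm"
  shows "(\<integral>\<^sup>+x. \<integral>\<^sup>+y. indicator \<Omega> x * indicator \<Omega> y * (indicator D x + indicator D y)
        * ennreal (norm (x - y) powr -(real DIM('a) + s)) * ennreal (norm (x - y)) \<partial>lebesgue \<partial>lebesgue)
    \<le> 2 * ennreal (4 * unit_ball_vol (real DIM('a)) * 2 powr real DIM('a) * (1 + Dm) / (1 - s)) * emeasure lebesgue (D \<inter> \<Omega>)"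
proof -
  let ?K = "ennreal (4 * unit_ball_vol (real DIM('a)) * 2 powr real DIM('a) * (1 + Dm) / (1 - s))"
  let ?f = "\<lambda>x y. indicator \<Omega> x * indicator \<Omega> y * indicator D x
        * ennreal (norm (x - y) powr -(real DIM('a) + s)) * ennreal (norm (x - y))"
  have Om[measurable]: "\<Omega> \<in> sets lebesgue" by simp
  have nm[measurable]: "(\<lambda>(x, y). ennreal (norm (x - y))) \<in> borel_measurable ((lebesgue :: 'a measure) \<Otimes>\<^sub>M lebesgue)"
  proof -
    have "(\<lambda>p::'a\<times>'a. ennreal (norm (fst p - snd p))) \<in> borel_measurable borel"
      by (intro measurable_compose[OF borel_measurable_continuous_onI[of "\<lambda>p. norm (fst p - snd p)"]] continuous_intros) auto
    from measurable_compose[OF leb2_borel this] show ?thesis by (simp add: case_prod_beta')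
  qed
  have nm1[measurable]: "(\<lambda>y. ennreal (norm (x - y))) \<in> borel_measurable (lebesgue :: 'a measure)" for x
    by (rule measurable_compose[OF id_leb_borel]) (intro measurable_compose[OF borel_measurable_continuous_onI[of "\<lambda>y. norm (x - y)"]] continuous_intros; auto)
  have fm: "case_prod ?f \<in> borel_measurable (lebesgue \<Otimes>\<^sub>M lebesgue)" by measurable
  have "(\<integral>\<^sup>+x. \<integral>\<^sup>+y. indicator \<Omega> x * indicator \<Omega> y * (indicator D x + indicator D y)
        * ennreal (norm (x - y) powr -(real DIM('a) + s)) * ennreal (norm (x - y)) \<partial>lebesgue \<partial>lebesgue)
    = (\<integral>\<^sup>+x. \<integral>\<^sup>+y. ?f x y + ?f y x \<partial>lebesgue \<partial>lebesgue)"
    by (intro nn_integral_cong) (simp add: distrib_left distrib_right norm_minus_commute ac_simps)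
  also have "\<dots> = (\<integral>\<^sup>+x. \<integral>\<^sup>+y. ?f x y \<partial>lebesgue \<partial>lebesgue) + (\<integral>\<^sup>+x. \<integral>\<^sup>+y. ?f y x \<partial>lebesgue \<partial>lebesgue)"
    by (simp add: nn_integral_add)
  also have "(\<integral>\<^sup>+x. \<integral>\<^sup>+y. ?f y x \<partial>lebesgue \<partial>lebesgue) = (\<integral>\<^sup>+y. \<integral>\<^sup>+x. ?f y x \<partial>lebesgue \<partial>lebesgue)"
    by (rule lebpair.Fubini'[symmetric]) (use fm in \<open>simp add: case_prod_beta'\<close>)
  also have "(\<integral>\<^sup>+x. \<integral>\<^sup>+y. ?f x y \<partial>lebesgue \<partial>lebesgue) + (\<integral>\<^sup>+y. \<integral>\<^sup>+x. ?f y x \<partial>lebesgue \<partial>lebesgue) \<le> ?K * emeasure lebesgue (D \<inter> \<Omega>) + ?K * emeasure lebesgue (D \<inter> \<Omega>)"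
    using half_bound[OF assms] by (intro add_mono) auto
  also have "\<dots> = 2 * ?K * emeasure lebesgue (D \<inter> \<Omega>)" by (simp only: mult_2 distrib_right)
  finally show ?thesis .
qed


lemma Liminf_add_Limsup_ennreal:
  fixes f g :: "_ \<Rightarrow> ennreal"
  assumes F: "F \<noteq> bot"
  shows "Liminf F (\<lambda>x. f x + g x) \<le> Liminf F f + Limsup F g"
proof (rule ennreal_le_epsilon)
  fix e :: real assume fin: "Liminf F f + Limsup F g < top" and e: "0 < e"
  have B: "Limsup F g < top" using fin by (auto simp: top_unique)
  have "Limsup F g < Limsup F g + ennreal e" using B e by (cases "Limsup F g") (auto simp: ennreal_plus[symmetric] ennreal_less_iff simp del: ennreal_plus)
  then have ev: "eventually (\<lambda>x. g x < Limsup F g + ennreal e) F" by (rule Limsup_lessD)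
  have "Liminf F (\<lambda>x. f x + g x) \<le> Liminf F (\<lambda>x. f x + (Limsup F g + ennreal e))"
    by (rule Liminf_mono) (use ev in \<open>eventually_elim, auto intro: add_left_mono less_imp_le\<close>)
  also have "\<dots> = Liminf F f + (Limsup F g + ennreal e)"
    by (rule Liminf_add_const[OF F])
  finally show "Liminf F (\<lambda>x. f x + g x) \<le> Liminf F f + Limsup F g + ennreal e" by (simp add: ac_simps)
qed


theorem corollary12:
  fixes \<Omega> E :: "'a::euclidean_space set" and Es :: "real \<Rightarrow> 'a set"
    and \<delta>1 \<delta>2 :: real
  assumes "bounded \<Omega>" "connected \<Omega>" "open \<Omega>"
    and "DIM('a) = 1 \<or> lipschitz_boundary \<Omega>"
    and "E \<in> sets lebesgue"
    and "\<And>s. s \<in> {0<..<1} \<Longrightarrow> Es s \<in> sets lebesgue"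
    and "((\<lambda>s. L1dist_char \<Omega> (Es s) E) \<longlongrightarrow> 0) (at_left 1)"
    and "\<And>s. s \<in> {0<..<1} \<Longrightarrow> J1 s (Es s) \<Omega> < \<infinity>"
    and "\<And>s. s \<in> {0<..<1} \<Longrightarrow> J1 s E \<Omega> < \<infinity>"
    and "\<delta>1 > \<delta>2" "\<delta>2 > 0"
  shows "\<exists>F :: real \<Rightarrow> 'a set.
    (\<forall>s \<in> {0<..<1}. F s \<in> sets lebesgue) \<and>
    ((\<lambda>s. L1dist_char \<Omega> (F s) E) \<longlongrightarrow> 0) (at_left 1) \<and>
    (\<forall>s \<in> {0<..<1}. F s \<inter> (\<Omega> - strip \<Omega> \<delta>1) = Es s \<inter> (\<Omega> - strip \<Omega> \<delta>1)
                   \<and> F s \<inter> strip \<Omega> \<delta>2 = E \<inter> strip \<Omega> \<delta>2) \<and>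
    (\<forall>\<epsilon>>0. Liminf (at_left 1) (\<lambda>s. ennreal (1 - s) * J1 s (F s) \<Omega>)
              \<le> Liminf (at_left 1) (\<lambda>s. ennreal (1 - s) * J1 s (Es s) \<Omega>)
                + Limsup (at_left 1) (\<lambda>s. ennreal (1 - s) * J1 s E (strip \<Omega> (\<delta>1 + \<epsilon>))))"
  proof -
  have Om[measurable]: "\<Omega> \<in> sets lebesgue" using \<open>open \<Omega>\<close> by simp
  have Em[measurable]: "E \<in> sets lebesgue" by fact
  have Esm: "\<And>s. s \<in> {0<..<1} \<Longrightarrow> Es s \<in> sets lebesgue" by fact
  have Lconv: "((\<lambda>s. L1dist_char \<Omega> (Es s) E) \<longlongrightarrow> 0) (at_left 1)" by fact
  have d12: "\<delta>2 < \<delta>1" "0 < \<delta>2" by fact+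
  obtain x0 e0 where e0: "\<Omega> \<subseteq> cball x0 e0" "0 \<le> e0" using \<open>bounded \<Omega>\<close> bounded_subset_cball by blast
  define Dm where "Dm = 2 * e0 + 1"
  have Dm: "Dm > 0" using e0 by (simp add: Dm_def)
  have cb: "\<Omega> \<subseteq> cball z Dm" if "z \<in> \<Omega>" for z
  proof
    fix y assume "y \<in> \<Omega>"
    then have "dist x0 y \<le> e0" "dist x0 z \<le> e0" using e0 that by auto
    then have "dist z y \<le> 2 * e0" by (smt (verit) dist_commute dist_triangle)
    then show "y \<in> cball z Dm" by (simp add: Dm_def)
  qed
  define K' where "K' = 4 * unit_ball_vol (real DIM('a)) * 2 powr real DIM('a) * (1 + Dm)"
  have K': "K' \<ge> 0" using Dm unfolding K'_def by simp
  define w where "w = \<delta>1 - \<delta>2"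
  have w: "w > 0" using d12 by (simp add: w_def)
  define D where "D s = (Es s - E) \<union> (E - Es s)" for s
  define L where "L s = L1dist_char \<Omega> (Es s) E" for s
  have Dms: "D s \<in> sets lebesgue" if "s \<in> {0<..<1}" for s
    using Esm[OF that] unfolding D_def by measurable
  have L_eq: "L s = emeasure lebesgue (D s \<inter> \<Omega>)" if "s \<in> {0<..<1}" for s
  proof -
    have "L s = (\<integral>\<^sup>+x. indicator (D s \<inter> \<Omega>) x \<partial>lebesgue)"
      unfolding L_def L1dist_char_def
      by (intro nn_integral_cong) (auto simp: D_def indicator_def)
    also have "\<dots> = emeasure lebesgue (D s \<inter> \<Omega>)"
      using Dms[OF that] by (intro nn_integral_indicator) simp
    finally show ?thesis .
  qed
  define c where "c s = 2 * K' * enn2real (L s) / ((1 - s) * w) + 1" for s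
  have ex: "\<exists>t. t \<in> {\<delta>2<..<\<delta>1} \<and> (L s < \<infinity> \<longrightarrow> Rf s \<Omega> (D s) t \<le> ennreal (c s))"
    if s: "s \<in> {0<..<1}" for s
  proof (cases "L s < \<infinity>")
    case False then show ?thesis using d12 by (auto intro!: exI[of _ "(\<delta>1+\<delta>2)/2"])
  next
    case True
    have s01: "0 < s" "s < 1" using s by auto
    have "(\<integral>\<^sup>+t. indicator {\<delta>2<..<\<delta>1} t * Rf s \<Omega> (D s) t \<partial>lborel)
      \<le> 2 * ennreal (K' / (1 - s)) * emeasure lebesgue (D s \<inter> \<Omega>)"
      using order_trans[OF Ravg[OF \<open>open \<Omega>\<close> Dms[OF s]] Lbound[OF \<open>open \<Omega>\<close> Dms[OF s] s01 Dm cb]]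
      by (simp add: K'_def)
    also have "\<dots> = ennreal (2 * K' * enn2real (L s) / (1 - s))"
    proof -
      have m: "emeasure lebesgue (D s \<inter> \<Omega>) = ennreal (enn2real (L s))" using True L_eq[OF s] by simp
      have e: "2 * K' * enn2real (L s) / (1 - s) = 2 * (K' / (1 - s)) * enn2real (L s)" by simp
      have kp: "0 \<le> K' / (1 - s)" using K' s01 by simp
      have "ennreal (2 * (K' / (1 - s)) * enn2real (L s)) = ennreal (2 * (K' / (1 - s))) * ennreal (enn2real (L s))"
        using kp by (intro ennreal_mult) auto
      also have "ennreal (2 * (K' / (1 - s))) = ennreal 2 * ennreal (K' / (1 - s))"
        using kp by (intro ennreal_mult) auto
      finally show ?thesis unfolding m e by simp

    qed
    finally have avg: "(\<integral>\<^sup>+t. indicator {\<delta>2<..<\<delta>1} t * Rf s \<Omega> (D s) t \<partial>lborel) \<le> ennreal (2 * K' * enn2real (L s) / (1 - s))" .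
    show ?thesis
    proof (rule ccontr)
      assume "\<not> ?thesis"
      then have gt: "\<forall>t\<in>{\<delta>2<..<\<delta>1}. ennreal (c s) < Rf s \<Omega> (D s) t" using True by auto
      have cpos: "c s \<ge> 0" unfolding c_def using K' w s01 by simp
      have "ennreal (c s * w) = (\<integral>\<^sup>+t. ennreal (c s) * indicator {\<delta>2<..<\<delta>1} t \<partial>lborel)"
        using d12 cpos w by (subst nn_integral_cmult_indicator) (auto simp: w_def ennreal_mult)
      also have "\<dots> \<le> (\<integral>\<^sup>+t. indicator {\<delta>2<..<\<delta>1} t * Rf s \<Omega> (D s) t \<partial>lborel)"
        using gt by (intro nn_integral_mono) (auto simp: indicator_def less_imp_le)
      also have "\<dots> \<le> ennreal (2 * K' * enn2real (L s) / (1 - s))" by (rule avg)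
      finally have le: "c s * w \<le> 2 * K' * enn2real (L s) / (1 - s)"
        using K' s01 by (subst (asm) ennreal_le_iff) auto
      have "c s * w = 2 * K' * enn2real (L s) / (1 - s) + w" unfolding c_def using w s01 by (simp add: field_simps)
      with le w show False by linarith
    qed
  qed
  define t where "t s = (SOME t. t \<in> {\<delta>2<..<\<delta>1} \<and> (L s < \<infinity> \<longrightarrow> Rf s \<Omega> (D s) t \<le> ennreal (c s)))" for s
  have t: "t s \<in> {\<delta>2<..<\<delta>1}" "L s < \<infinity> \<Longrightarrow> Rf s \<Omega> (D s) (t s) \<le> ennreal (c s)" if "s \<in> {0<..<1}" for s
    using someI_ex[OF ex[OF that]] unfolding t_def by auto
  define F where "F s = Es s \<inter> {x. t s < infdist x (-\<Omega>)} \<union> E \<inter> {x. infdist x (-\<Omega>) \<le> t s}" for s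
  have Fm: "\<forall>s \<in> {0<..<1}. F s \<in> sets lebesgue"
  proof
    fix s :: real assume s: "s \<in> {0<..<1}"
    have o: "open {x::'a. t s < infdist x (-\<Omega>)}" by (intro open_Collect_less continuous_intros)
    have c: "closed {x::'a. infdist x (-\<Omega>) \<le> t s}" by (intro closed_Collect_le continuous_intros)
    show "F s \<in> sets lebesgue" unfolding F_def using Esm[OF s] o c by auto
  qed
  have FL: "L1dist_char \<Omega> (F s) E \<le> L s" for s
    unfolding L1dist_char_def L_def F_def
    by (intro nn_integral_mono ennreal_leI) (auto simp: indicator_def)
  have conv: "((\<lambda>s. L1dist_char \<Omega> (F s) E) \<longlongrightarrow> 0) (at_left 1)"
  proof (rule tendsto_sandwich[of "\<lambda>_. 0" _ _ L])
    show "\<forall>\<^sub>F s in at_left 1. 0 \<le> L1dist_char \<Omega> (F s) E" by simp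
    show "\<forall>\<^sub>F s in at_left 1. L1dist_char \<Omega> (F s) E \<le> L s" using FL by simp
    show "((\<lambda>_. 0) \<longlongrightarrow> (0::ennreal)) (at_left 1)" by simp
    show "(L \<longlongrightarrow> 0) (at_left 1)" using Lconv unfolding L_def by simp
  qed
  have eqs: "\<forall>s \<in> {0<..<1}. F s \<inter> (\<Omega> - strip \<Omega> \<delta>1) = Es s \<inter> (\<Omega> - strip \<Omega> \<delta>1)
                   \<and> F s \<inter> strip \<Omega> \<delta>2 = E \<inter> strip \<Omega> \<delta>2"
  proof
    fix s :: real assume s: "s \<in> {0<..<1}"
    have "\<delta>2 < t s" "t s < \<delta>1" using t(1)[OF s] by auto
    then show "F s \<inter> (\<Omega> - strip \<Omega> \<delta>1) = Es s \<inter> (\<Omega> - strip \<Omega> \<delta>1)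
                   \<and> F s \<inter> strip \<Omega> \<delta>2 = E \<inter> strip \<Omega> \<delta>2"
      unfolding F_def strip_def by auto
  qed
  have ev01: "\<forall>\<^sub>F s in at_left 1. s \<in> {0<..<1::real}"
    by (rule eventually_at_left_1) auto
  have Lfin: "\<forall>\<^sub>F s in at_left 1. L s < \<infinity>"
  proof -
    have "(L \<longlongrightarrow> 0) (at_left 1)" using Lconv unfolding L_def by simp
    then have "eventually (\<lambda>s. L s < 1) (at_left 1)" using order_tendstoD(2)[of L 0 "at_left 1" 1] by simp
    moreover have "(1::ennreal) < \<infinity>" by simp
    ultimately show ?thesis by (metis (mono_tags, lifting) eventually_mono less_trans)
  qed
  define r where "r s = ennreal (1 - s) * Rf s \<Omega> (D s) (t s)" for s
  have g0: "((\<lambda>s. ennreal (2 * K' * enn2real (L s) / w + (1 - s))) \<longlongrightarrow> 0) (at_left 1)"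
  proof -
    have "(L \<longlongrightarrow> ennreal 0) (at_left 1)" using Lconv unfolding L_def by simp
    then have "((\<lambda>s. enn2real (L s)) \<longlongrightarrow> 0) (at_left 1)" by (rule tendsto_enn2real) simp
    then have "((\<lambda>s. 2 * K' * enn2real (L s) / w + (1 - s)) \<longlongrightarrow> 2 * K' * 0 / w + (1 - 1)) (at_left (1::real))"
      using w by (intro tendsto_add tendsto_divide tendsto_mult tendsto_const tendsto_diff tendsto_ident_at) auto
    then have "((\<lambda>s. ennreal (2 * K' * enn2real (L s) / w + (1 - s))) \<longlongrightarrow> ennreal 0) (at_left (1::real))"
      by (intro tendsto_ennrealI) simp
    then show ?thesis by simp
  qed
  have r0: "(r \<longlongrightarrow> 0) (at_left 1)"
  proof (rule tendsto_sandwich[of "\<lambda>_. 0" _ _ "\<lambda>s. ennreal (2 * K' * enn2real (L s) / w + (1 - s))"])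
    show "\<forall>\<^sub>F s in at_left 1. 0 \<le> r s" by simp
    show "\<forall>\<^sub>F s in at_left 1. r s \<le> ennreal (2 * K' * enn2real (L s) / w + (1 - s))"
      using ev01 Lfin
    proof eventually_elim
      case (elim s)
      then have s01: "0 < s" "s < 1" by auto
      have "r s \<le> ennreal (1 - s) * ennreal (c s)"
        unfolding r_def using t(2)[OF elim(1) elim(2)] by (intro mult_left_mono) auto
      also have "\<dots> = ennreal ((1 - s) * c s)"
      proof -
        have "c s \<ge> 0" unfolding c_def using K' w s01 by simp
        then show ?thesis using s01 by (intro ennreal_mult[symmetric]) auto
      qed
      also have "(1 - s) * c s = 2 * K' * enn2real (L s) / w + (1 - s)"
        unfolding c_def using s01 w by (simp add: field_simps)
      finally show ?case .
    qed
    show "((\<lambda>_. 0) \<longlongrightarrow> (0::ennreal)) (at_left 1)" by simp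
    show "((\<lambda>s. ennreal (2 * K' * enn2real (L s) / w + (1 - s))) \<longlongrightarrow> 0) (at_left 1)" by (rule g0)
  qed
  have rlim: "Limsup (at_left 1) r = 0"
    by (rule lim_imp_Limsup[OF _ r0]) simp
  have lim: "Liminf (at_left 1) (\<lambda>s. ennreal (1 - s) * J1 s (F s) \<Omega>)
              \<le> Liminf (at_left 1) (\<lambda>s. ennreal (1 - s) * J1 s (Es s) \<Omega>)
                + Limsup (at_left 1) (\<lambda>s. ennreal (1 - s) * J1 s E (strip \<Omega> (\<delta>1 + \<epsilon>)))"
    if eps: "\<epsilon> > 0" for \<epsilon>
  proof -
    let ?a = "\<lambda>s. ennreal (1 - s) * J1 s (Es s) \<Omega>"
    let ?b = "\<lambda>s. ennreal (1 - s) * J1 s E (strip \<Omega> (\<delta>1 + \<epsilon>))"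
    have "Liminf (at_left 1) (\<lambda>s. ennreal (1 - s) * J1 s (F s) \<Omega>) \<le> Liminf (at_left 1) (\<lambda>s. (?a s + r s) + ?b s)"
    proof (rule Liminf_mono)
      show "\<forall>\<^sub>F s in at_left 1. ennreal (1 - s) * J1 s (F s) \<Omega> \<le> (?a s + r s) + ?b s"
        using ev01
      proof eventually_elim
        case (elim s)
        have "t s \<le> \<delta>1 + \<epsilon>" using t(1)[OF elim] eps by auto
        from Jbound[OF this \<open>open \<Omega>\<close> Em Esm[OF elim], of s]
        have "J1 s (F s) \<Omega> \<le> J1 s (Es s) \<Omega> + J1 s E (strip \<Omega> (\<delta>1 + \<epsilon>)) + Rf s \<Omega> (D s) (t s)"
          unfolding F_def D_def .
        then have "ennreal (1 - s) * J1 s (F s) \<Omega> \<le> ennreal (1 - s) * (J1 s (Es s) \<Omega> + J1 s E (strip \<Omega> (\<delta>1 + \<epsilon>)) + Rf s \<Omega> (D s) (t s))"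
          by (rule mult_left_mono) simp
        then show ?case by (simp add: r_def distrib_left ac_simps)
      qed
    qed
    also have "\<dots> \<le> Liminf (at_left 1) (\<lambda>s. ?a s + r s) + Limsup (at_left 1) ?b"
      by (rule Liminf_add_Limsup_ennreal) simp
    also have "Liminf (at_left 1) (\<lambda>s. ?a s + r s) \<le> Liminf (at_left 1) ?a + Limsup (at_left 1) r"
      by (rule Liminf_add_Limsup_ennreal) simp
    finally show ?thesis using rlim by (simp add: add_right_mono)
  qed
  show ?thesis
    by (rule exI[of _ F]) (use Fm conv eqs lim in auto)
qed

end
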